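(* Let $I,S:\mathbb{R}\to\mathbb{R}$ be $2\pi$-periodic Lipschitz functions with $I(\theta)\ge\rho$ for all $\theta$, for some $\rho>0$, and $\min_{[-\pi,\pi]}S<0<\max_{[-\pi,\pi]}S$. Let $(\theta_i(t))$ solve $\dot\theta_i=\omega_i+\frac{\kappa}{N}\sum_{j=1}^NI(\theta_j)S(\theta_i)$, $\theta_i(0)=\theta_i^0$. Fix $\mathcal B\subset\{1,\dots,N\}$ and let $\|\Omega_{\mathcal B}\|_\infty=\max_{i\in\mathcal B}|\omega_i|$. If \[ \kappa>\frac{\|\Omega_{\mathcal B}\|_\infty}{\rho\min\{-\min S,\max S\}}, \] then $\sup_{t\ge0}\theta_i(t)-\inf_{t\ge0}\theta_i(t)<2\pi$ for all $i\in\mathcal B$. *)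

theory Defs
  imports "HOL-Analysis.Analysis"
begin

end

theory Submission
  imports Defs
begin

lemma barrier_strict:
  fixes f D :: "real \<Rightarrow> real"
  assumes der: "\<And>t. t \<ge> 0 \<Longrightarrow> (f has_real_derivative D t) (at t within {0..})"
    and neg: "\<And>t. t \<ge> 0 \<Longrightarrow> f t = A \<Longrightarrow> D t < 0"
    and s0: "0 \<le> s" and st: "s \<le> t" and fs: "f s < A"
  shows "f t < A"
proof (rule ccontr)
  assume "\<not> f t < A"
  hence ft: "A \<le> f t" by simp
  have cont: "continuous_on {0..} f"
    using der unfolding continuous_on_eq_continuous_within by (auto intro: DERIV_continuous)
  have contst: "\<And>a b. 0 \<le> a \<Longrightarrow> continuous_on {a..b} f"
    using cont by (rule continuous_on_subset) auto
  define T where "T = {r \<in> {s..t}. f r = A}"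
  have "\<exists>r\<ge>s. r \<le> t \<and> f r = A"
    using IVT'[of f s A t] fs ft st contst[OF s0] by auto
  hence Tne: "T \<noteq> {}" unfolding T_def by auto
  have Tcl: "closed T" unfolding T_def
    by (rule continuous_closed_preimage_constant[OF contst[OF s0]]) simp
  have Tc: "compact T" using Tcl unfolding T_def
    unfolding compact_eq_bounded_closed by (auto intro: bounded_subset[of "{s..t}"])
  obtain \<tau> where tauT: "\<tau> \<in> T" and taumin: "\<And>r. r \<in> T \<Longrightarrow> \<tau> \<le> r"
    using continuous_attains_inf[OF Tc Tne, of "\<lambda>x. x"] by auto
  have ftau: "f \<tau> = A" and taus: "s \<le> \<tau>" and taut: "\<tau> \<le> t" using tauT T_def by auto
  have "\<tau> \<noteq> s" using ftau fs by auto
  hence taus': "s < \<tau>" using taus by simp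
  obtain d where d: "d > 0" "\<And>h. h > 0 \<Longrightarrow> \<tau> - h \<in> {0..} \<Longrightarrow> h < d \<Longrightarrow> f \<tau> < f (\<tau> - h)"
    using has_real_derivative_neg_dec_left[OF der[of \<tau>] neg[of \<tau>]] s0 taus ftau by auto
  define h where "h = min (d/2) ((\<tau> - s)/2)"
  have "h \<le> (\<tau> - s)/2" "h \<le> d/2" unfolding h_def by (rule min.cobounded2, rule min.cobounded1)
  moreover have "h = d/2 \<or> h = (\<tau> - s)/2" unfolding h_def min_def by (cases "d / 2 \<le> (\<tau> - s) / 2") auto
  ultimately have h: "h > 0" "h < d" "\<tau> - h > s" using d(1) taus' by auto
  have "f (\<tau> - h) > A" using d(2)[of h] h s0 ftau by auto
  then obtain r where r: "r \<ge> s" "r \<le> \<tau> - h" "f r = A"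
    using IVT'[of f s A "\<tau> - h"] fs h contst[OF s0] by auto
  hence "r \<in> T" using taut h unfolding T_def by auto
  thus False using taumin[of r] r h by auto
qed

lemma barrier:
  fixes f D :: "real \<Rightarrow> real"
  assumes der: "\<And>t. t \<ge> 0 \<Longrightarrow> (f has_real_derivative D t) (at t within {0..})"
    and neg: "\<And>t. t \<ge> 0 \<Longrightarrow> f t = A \<Longrightarrow> D t < 0"
    and s0: "0 \<le> s" and st: "s < t" and fs: "f s \<le> A"
  shows "f t < A"
proof (cases "f s < A")
  case True show ?thesis by (rule barrier_strict[OF der neg s0 less_imp_le[OF st] True])
next
  case False
  hence fsA: "f s = A" using fs by auto
  obtain d where d: "d > 0" "\<And>h. h > 0 \<Longrightarrow> s + h \<in> {0..} \<Longrightarrow> h < d \<Longrightarrow> f s > f (s + h)"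
    using has_real_derivative_neg_dec_right[OF der[OF s0] neg[OF s0 fsA]] by auto
  define h where "h = min (d/2) (t - s)"
  have "h \<le> t - s" "h \<le> d/2" unfolding h_def by (rule min.cobounded2, rule min.cobounded1)
  moreover have "h = d/2 \<or> h = t - s" unfolding h_def min_def by (cases "d / 2 \<le> t - s") auto
  ultimately have h: "h > 0" "h < d" "s + h \<le> t" using d(1) st by auto
  have "f (s + h) < A" using d(2)[of h] h s0 fsA by simp
  moreover have "0 \<le> s + h" using h s0 by simp
  ultimately show ?thesis using barrier_strict[of f D A "s+h" t, OF der neg] h(3) by blast
qed

theorem proposition4p2:
  fixes I S :: "real \<Rightarrow> real" and \<rho> \<kappa> :: real and N :: nat
    and \<omega> :: "nat \<Rightarrow> real" and \<theta>0 :: "nat \<Rightarrow> real"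
    and \<theta> :: "nat \<Rightarrow> real \<Rightarrow> real" and B :: "nat set"
  assumes I_per: "\<And>x. I (x + 2 * pi) = I x"
    and S_per: "\<And>x. S (x + 2 * pi) = S x"
    and I_lip: "\<exists>L. L-lipschitz_on UNIV I"
    and S_lip: "\<exists>L. L-lipschitz_on UNIV S"
    and rho_pos: "\<rho> > 0"
    and I_ge: "\<And>x. I x \<ge> \<rho>"
    and S_min: "Inf (S ` {-pi..pi}) < 0"
    and S_max: "Sup (S ` {-pi..pi}) > 0"
    and ode: "\<And>i t. i \<in> {1..N} \<Longrightarrow> t \<ge> 0 \<Longrightarrow>
        (\<theta> i has_real_derivative
           (\<omega> i + \<kappa> / real N * (\<Sum>j=1..N. I (\<theta> j t)) * S (\<theta> i t))) (at t within {0..})"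
    and init: "\<And>i. i \<in> {1..N} \<Longrightarrow> \<theta> i 0 = \<theta>0 i"
    and B_sub: "B \<subseteq> {1..N}"
    and kappa: "\<kappa> > Max ((\<lambda>i. \<bar>\<omega> i\<bar>) ` B)
                  / (\<rho> * min (- Inf (S ` {-pi..pi})) (Sup (S ` {-pi..pi})))"
  shows "\<forall>i\<in>B. bdd_above (\<theta> i ` {0..}) \<and> bdd_below (\<theta> i ` {0..}) \<and>
           (SUP t\<in>{0..}. \<theta> i t) - (INF t\<in>{0..}. \<theta> i t) < 2 * pi"
  proof
  fix i assume iB: "i \<in> B"
  have iN: "i \<in> {1..N}" using iB B_sub by auto
  have finB: "finite B" using B_sub finite_subset by blast
  have Npos: "real N > 0" using iN by auto
  obtain LS where LS: "LS-lipschitz_on UNIV S" using S_lip by auto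
  have Sc: "continuous_on UNIV S" using lipschitz_on_continuous_on[OF LS] .
  have Sc': "continuous_on {-pi..pi} S" using continuous_on_subset[OF Sc] by auto
  obtain a where a: "a \<in> {-pi..pi}" "\<And>y. y \<in> {-pi..pi} \<Longrightarrow> S a \<le> S y"
    using continuous_attains_inf[OF compact_Icc _ Sc'] pi_ge_zero by auto
  obtain b where b: "b \<in> {-pi..pi}" "\<And>y. y \<in> {-pi..pi} \<Longrightarrow> S y \<le> S b"
    using continuous_attains_sup[OF compact_Icc _ Sc'] pi_ge_zero by auto
  have aInf: "S a \<le> Inf (S ` {-pi..pi})"
    by (rule cInf_greatest) (use a pi_ge_zero in auto)
  have bSup: "Sup (S ` {-pi..pi}) \<le> S b"
    by (rule cSup_least) (use b pi_ge_zero in auto)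
  define mn where "mn = min (- Inf (S ` {-pi..pi})) (Sup (S ` {-pi..pi}))"
  have mn_pos: "mn > 0" using S_min S_max unfolding mn_def by auto
  have Sa: "S a \<le> - mn" using aInf unfolding mn_def by auto
  have Sb: "S b \<ge> mn" using bSup unfolding mn_def by auto
  have Sper_nat: "S (x + 2 * pi * real n) = S x" for x n
  proof (induction n)
    case 0 then show ?case by simp
  next
    case (Suc n)
    have "S (x + 2 * pi * real (Suc n)) = S ((x + 2 * pi * real n) + 2 * pi)" by (simp add: algebra_simps)
    also have "\<dots> = S (x + 2 * pi * real n)" by (rule S_per)
    finally show ?case using Suc by simp
  qed
  have Sper: "S (x + 2 * pi * of_int k) = S x" for x k
  proof (cases "k \<ge> 0")
    case True
    then obtain n where "k = int n" by (rule nonneg_int_cases)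
    then show ?thesis using Sper_nat[of x n] by simp
  next
    case False
    then obtain n where n: "k = - int n" by (intro that[of "nat (- k)"]) simp
    have "S x = S ((x + 2 * pi * of_int k) + 2 * pi * real n)" using n by simp
    also have "\<dots> = S (x + 2 * pi * of_int k)" by (rule Sper_nat)
    finally show ?thesis by simp
  qed
  define W where "W = Max ((\<lambda>i. \<bar>\<omega> i\<bar>) ` B)"
  have wW: "\<bar>\<omega> i\<bar> \<le> W" unfolding W_def using finB iB by (auto intro: Max_ge)
  have rm: "\<rho> * mn > 0" using rho_pos mn_pos by simp
  have "\<kappa> > W / (\<rho> * mn)" using kappa unfolding W_def mn_def .
  hence kW: "\<kappa> * (\<rho> * mn) > W" using rm by (simp add: pos_divide_less_eq)
  have kpos: "\<kappa> > 0"
  proof -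
    have "\<kappa> * (\<rho> * mn) > 0" using kW wW by linarith
    thus ?thesis using rm by (simp add: zero_less_mult_iff)
  qed
  define Phi where "Phi = (\<lambda>t. \<kappa> / real N * (\<Sum>j=1..N. I (\<theta> j t)))"
  have Phi_ge: "Phi t \<ge> \<kappa> * \<rho>" for t
  proof -
    have "(\<Sum>j=1..N. I (\<theta> j t)) \<ge> (\<Sum>j=1..N. \<rho>)" by (rule sum_mono) (use I_ge in auto)
    hence "(\<Sum>j=1..N. I (\<theta> j t)) \<ge> real N * \<rho>" by simp
    hence "\<kappa> / real N * (\<Sum>j=1..N. I (\<theta> j t)) \<ge> \<kappa> / real N * (real N * \<rho>)"
      using kpos Npos by (intro mult_left_mono) auto
    thus ?thesis using Npos unfolding Phi_def by simp
  qed
  have Phimn: "Phi t * mn > \<bar>\<omega> i\<bar>" for t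
  proof -
    have "Phi t * mn \<ge> \<kappa> * \<rho> * mn" using Phi_ge[of t] mn_pos by (intro mult_right_mono) auto
    thus ?thesis using kW wW by (simp add: mult.assoc)
  qed
  have Phipos: "Phi t > 0" for t using Phi_ge[of t] kpos rho_pos
    by (metis less_le_trans zero_less_mult_iff)
  define D where "D = (\<lambda>t. \<omega> i + Phi t * S (\<theta> i t))"
  have der: "\<And>t. t \<ge> 0 \<Longrightarrow> (\<theta> i has_real_derivative D t) (at t within {0..})"
    using ode[OF iN] unfolding D_def Phi_def by simp
  have derm: "\<And>t. t \<ge> 0 \<Longrightarrow> ((\<lambda>t. - \<theta> i t) has_real_derivative - D t) (at t within {0..})"
    using der by (intro DERIV_minus) auto
  have cont: "continuous_on {0..} (\<theta> i)"
    using der unfolding continuous_on_eq_continuous_within by (auto intro: DERIV_continuous)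
  have contI: "continuous_on {0..t1} (\<theta> i)" for t1
    using cont by (rule continuous_on_subset) auto
  have BA: "\<theta> i t < P" if "S P = S a" "0 \<le> s" "s < t" "\<theta> i s \<le> P" for P s t
  proof (rule barrier[of "\<theta> i" D P s t, OF der _ that(2-4)])
    fix t assume "0 \<le> t" "\<theta> i t = P"
    hence "D t = \<omega> i + Phi t * S a" unfolding D_def using that(1) by simp
    moreover have "Phi t * S a \<le> Phi t * (- mn)" using Sa Phipos[of t] by (intro mult_left_mono) auto
    ultimately show "D t < 0" using Phimn[of t] by linarith
  qed auto
  have BB: "\<theta> i t > P" if "S P = S b" "0 \<le> s" "s < t" "\<theta> i s \<ge> P" for P s t
  proof -
    have "- \<theta> i t < - P"
    proof (rule barrier[of "\<lambda>t. - \<theta> i t" "\<lambda>t. - D t" "- P" s t, OF derm _ that(2-3)])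
      fix t assume "0 \<le> t" "- \<theta> i t = - P"
      hence "D t = \<omega> i + Phi t * S b" unfolding D_def using that(1) by simp
      moreover have "Phi t * S b \<ge> Phi t * mn" using Sb Phipos[of t] by (intro mult_left_mono) auto
      ultimately show "- D t < 0" using Phimn[of t] by linarith
    qed (use that in auto)
    thus ?thesis by simp
  qed
  define u where "u = \<theta> i 0"
  define kA where "kA = \<lceil>(u - a) / (2 * pi)\<rceil>"
  define A where "A = a + 2 * pi * of_int kA"
  define a' where "a' = a + 2 * pi * of_int (kA - 1)"
  have a'A: "a' = A - 2 * pi" unfolding a'_def A_def by (simp add: algebra_simps)
  have "(u - a) / (2 * pi) \<le> of_int kA" "of_int kA < (u - a) / (2 * pi) + 1"
    unfolding kA_def by linarith+
  hence uA: "u \<le> A" "A - 2 * pi < u" unfolding A_def using pi_gt_zero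
    by (auto simp: field_simps)
  define kB where "kB = \<lceil>(a' - b) / (2 * pi)\<rceil>"
  define b' where "b' = b + 2 * pi * of_int kB"
  have "(a' - b) / (2 * pi) \<le> of_int kB" "of_int kB < (a' - b) / (2 * pi) + 1"
    unfolding kB_def by linarith+
  hence b'a: "a' \<le> b'" "b' < a' + 2 * pi" unfolding b'_def using pi_gt_zero
    by (auto simp: field_simps)
  have SA: "S A = S a" "S a' = S a" unfolding A_def a'_def by (rule Sper)+
  have SB1: "S b' = S b" unfolding b'_def by (rule Sper)
  have "b' - 2 * pi = b + 2 * pi * of_int (kB - 1)" unfolding b'_def by (simp add: algebra_simps)
  hence SB2: "S (b' - 2 * pi) = S b" using Sper[of b "kB - 1"] by (simp only:)
  note SB = SB1 SB2
  have "b' \<noteq> a'" using SB SA Sa Sb mn_pos by auto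
  hence b'a': "a' < b'" using b'a by auto
  have b'A: "b' < A" using b'a a'A by simp
  have upA: "\<theta> i t \<le> A" if "t \<ge> 0" for t
  proof (cases "t = 0")
    case True then show ?thesis using uA u_def by simp
  next
    case False then show ?thesis using BA[OF SA(1), of 0 t] uA u_def that by auto
  qed
  have "\<exists>lo hi. hi - lo < 2 * pi \<and> (\<forall>t\<ge>0. lo \<le> \<theta> i t \<and> \<theta> i t \<le> hi)"
  proof (cases "\<exists>t1\<ge>0. \<theta> i t1 \<ge> b'")
    case True
    then obtain t1 where t1: "t1 \<ge> 0" "\<theta> i t1 \<ge> b'" by auto
    obtain tm where tm: "tm \<in> {0..t1}" "\<And>y. y \<in> {0..t1} \<Longrightarrow> \<theta> i tm \<le> \<theta> i y"
      using continuous_attains_inf[OF compact_Icc _ contI[of t1]] t1 by auto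
    have tma: "\<theta> i tm > a'"
    proof (rule ccontr)
      assume "\<not> \<theta> i tm > a'"
      hence le: "\<theta> i tm \<le> a'" by simp
      show False
      proof (cases "tm < t1")
        case True then show ?thesis using BA[OF SA(2) _ True le] tm t1 b'a' by auto
      next
        case False then have "tm = t1" using tm by auto
        then show ?thesis using le t1 b'a' by auto
      qed
    qed
    show ?thesis
    proof (intro exI conjI allI impI)
      show "A - min (\<theta> i tm) b' < 2 * pi" using tma b'a' a'A by auto
    next
      fix t :: real assume t0: "t \<ge> 0"
      show "\<theta> i t \<le> A" using upA[OF t0] .
      show "min (\<theta> i tm) b' \<le> \<theta> i t"
      proof (cases "t \<le> t1")
        case True then show ?thesis using tm(2)[of t] t0 by auto
      next
        case False then show ?thesis using BB[OF SB(1) t1(1) _ t1(2), of t] by auto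
      qed
    qed
  next
    case notB: False
    show ?thesis
    proof (cases "\<exists>t1\<ge>0. \<theta> i t1 \<le> a'")
      case True
      then obtain t1 where t1: "t1 \<ge> 0" "\<theta> i t1 \<le> a'" by auto
      obtain tM where tM: "tM \<in> {0..t1}" "\<And>y. y \<in> {0..t1} \<Longrightarrow> \<theta> i y \<le> \<theta> i tM"
        using continuous_attains_sup[OF compact_Icc _ contI[of t1]] t1 by auto
      have tMb: "\<theta> i tM < b'" using notB tM by auto
      show ?thesis
      proof (intro exI conjI allI impI)
        show "max (\<theta> i tM) a' - (b' - 2 * pi) < 2 * pi" using tMb b'a' by auto
      next
        fix t :: real assume t0: "t \<ge> 0"
        show "\<theta> i t \<le> max (\<theta> i tM) a'"
        proof (cases "t \<le> t1")
          case True then show ?thesis using tM(2)[of t] t0 by auto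
        next
          case False then show ?thesis using BA[OF SA(2) t1(1) _ t1(2), of t] by auto
        qed
        have u0: "\<theta> i 0 \<ge> b' - 2 * pi" using uA u_def b'A a'A by auto
        show "b' - 2 * pi \<le> \<theta> i t"
        proof (cases "t = 0")
          case True then show ?thesis using u0 by simp
        next
          case False then show ?thesis using BB[OF SB(2) _ _ u0, of t] t0 by auto
        qed
      qed
    next
      case False
      show ?thesis
      proof (intro exI conjI allI impI)
        show "b' - a' < 2 * pi" using b'A a'A by auto
      next
        fix t :: real assume "t \<ge> 0"
        then show "a' \<le> \<theta> i t" "\<theta> i t \<le> b'" using False notB by auto
      qed
    qed
  qed
  then obtain lo hi where lh: "hi - lo < 2 * pi" "\<And>t. t \<ge> 0 \<Longrightarrow> lo \<le> \<theta> i t \<and> \<theta> i t \<le> hi"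
    by auto
  have ba: "bdd_above (\<theta> i ` {0..})" using lh(2) by (auto intro!: bdd_aboveI2)
  have bb: "bdd_below (\<theta> i ` {0..})" using lh(2) by (auto intro!: bdd_belowI2)
  have "(SUP t\<in>{0..}. \<theta> i t) \<le> hi" by (rule cSUP_least) (use lh(2) in auto)
  moreover have "lo \<le> (INF t\<in>{0..}. \<theta> i t)" by (rule cINF_greatest) (use lh(2) in auto)
  ultimately show "bdd_above (\<theta> i ` {0..}) \<and> bdd_below (\<theta> i ` {0..}) \<and>
           (SUP t\<in>{0..}. \<theta> i t) - (INF t\<in>{0..}. \<theta> i t) < 2 * pi"
    using ba bb lh(1) by linarith
qed

end
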